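(* Let $\mathbf{u}=(u_1,u_2)$ be a pair of real binary forms of degree $d$. Then there exist real binary forms $g$ of degree $m$, $h$ of degree $k$, and $u_1',u_2'$ of degree $d-m-k$ such that: $(u_1,u_2)=(u_1'gh,\,u_2'gh)$; $\gcd(u_1,u_2)=gh$; $\gcd(u_1',u_2')=1$; $\gcd(u_1'^2+u_2'^2,\,g)=1$; and every (possibly complex) root of $h$ is a root of $u_1'^2+u_2'^2$. Moreover, this decomposition is unique up to multiplication by constants.
   Context: A real binary form of degree $d$ is a homogeneous polynomial of degree $d$ in two variables $x_1,x_2$ with real coefficients. Every binary form factors over $\mathbb{C}$ into linear factors $\prod_i(\alpha_i x_1-\beta_i x_2)$, uniquely up to scalars; a root of a binary form is a point $(\beta_i:\alpha_i)$ (a nonzero complex zero up to scaling). For binary forms, $a$ divides $b$ if $b=wa$ for some binary form $w$; $\gcd(a,b)$ is a common divisor of highest degree (unique up to scalar), and $a,b$ are coprime if $\gcd(a,b)=1$ (a constant). *)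

theory Defs
  imports "HOL-Computational_Algebra.Polynomial" Complex_Main
begin

text \<open>A real binary form of degree d is
  represented by the pair (d, p) with p a real univariate polynomial of degree at most d;
  the form is  F(x1,x2) = sum_{i<=d} coeff p i * x1^i * x2^(d-i).
  Products of forms: (d,p)*(e,q) = (d+e, p*q); sums of forms of equal degree:
  (d,p)+(d,q) = (d,p+q).\<close>

definition is_bform :: "nat \<Rightarrow> real poly \<Rightarrow> bool" where
  "is_bform d p \<longleftrightarrow> degree p \<le> d"

definition bf_eval :: "nat \<Rightarrow> real poly \<Rightarrow> complex \<Rightarrow> complex \<Rightarrow> complex" where
  "bf_eval d p x1 x2 = (\<Sum>i\<le>d. complex_of_real (coeff p i) * x1 ^ i * x2 ^ (d - i))"

definition bf_dvd :: "nat \<Rightarrow> real poly \<Rightarrow> nat \<Rightarrow> real poly \<Rightarrow> bool" where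
  "bf_dvd e q d p \<longleftrightarrow> e \<le> d \<and> (\<exists>w. is_bform (d - e) w \<and> p = w * q)"

definition bf_is_gcd :: "nat \<Rightarrow> real poly \<Rightarrow> nat \<Rightarrow> real poly \<Rightarrow> nat \<Rightarrow> real poly \<Rightarrow> bool" where
  "bf_is_gcd d1 p1 d2 p2 e q \<longleftrightarrow>
     is_bform e q \<and> bf_dvd e q d1 p1 \<and> bf_dvd e q d2 p2 \<and>
     (\<forall>e' q'. is_bform e' q' \<and> bf_dvd e' q' d1 p1 \<and> bf_dvd e' q' d2 p2 \<longrightarrow> e' \<le> e)"

definition bf_coprime :: "nat \<Rightarrow> real poly \<Rightarrow> nat \<Rightarrow> real poly \<Rightarrow> bool" where
  "bf_coprime d1 p1 d2 p2 \<longleftrightarrow> bf_is_gcd d1 p1 d2 p2 0 1"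

text \<open>The decomposition of the pair (u1,u2) of forms of degree d, with g of degree m,
  h of degree k, and v1 = u1', v2 = u2' of degree d - m - k.\<close>
definition bf_decomp :: "nat \<Rightarrow> real poly \<Rightarrow> real poly \<Rightarrow> nat \<Rightarrow> nat \<Rightarrow>
    real poly \<Rightarrow> real poly \<Rightarrow> real poly \<Rightarrow> real poly \<Rightarrow> bool" where
  "bf_decomp d u1 u2 m k g h v1 v2 \<longleftrightarrow>
     m + k \<le> d \<and> is_bform m g \<and> is_bform k h \<and>
     is_bform (d - m - k) v1 \<and> is_bform (d - m - k) v2 \<and>
     u1 = v1 * g * h \<and> u2 = v2 * g * h \<and>
     bf_is_gcd d u1 d u2 (m + k) (g * h) \<and>
     bf_coprime (d - m - k) v1 (d - m - k) v2 \<and>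
     bf_coprime (2 * (d - m - k)) (v1 ^ 2 + v2 ^ 2) m g \<and>
     (\<forall>x1 x2. (x1, x2) \<noteq> (0, 0) \<and> bf_eval k h x1 x2 = 0 \<longrightarrow>
        bf_eval (2 * (d - m - k)) (v1 ^ 2 + v2 ^ 2) x1 x2 = 0)"

end

theory Submission imports Defs "HOL-Computational_Algebra.Fundamental_Theorem_Algebra" "HOL-Computational_Algebra.Computational_Algebra" "HOL-Computational_Algebra.Field_as_Ring" begin

abbreviation cp :: "real poly \<Rightarrow> complex poly" where
  "cp p \<equiv> map_poly complex_of_real p"

lemma cp_mult: "cp (p * q) = cp p * cp q"
  by (simp add: poly_eq_iff coeff_map_poly coeff_mult)

lemma cp_dvd: "p dvd q \<Longrightarrow> cp p dvd cp q"
  by (metis cp_mult dvdE dvdI)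

lemma cp_degree[simp]: "degree (cp p) = degree p"
  by (rule degree_map_poly) simp

lemma eval_sum:
  assumes "degree p \<le> d"
  shows "poly (cp p) z = (\<Sum>i\<le>d. complex_of_real (coeff p i) * z ^ i)"
proof -
  have "poly (cp p) z = (\<Sum>i\<le>degree p. complex_of_real (coeff p i) * z ^ i)"
    by (simp add: poly_altdef coeff_map_poly)
  also have "\<dots> = (\<Sum>i\<le>d. complex_of_real (coeff p i) * z ^ i)"
    by (rule sum.mono_neutral_left) (use assms le_degree in auto)
  finally show ?thesis .
qed

lemma bf_eval_x2:
  assumes "x2 \<noteq> 0" "degree p \<le> d"
  shows "bf_eval d p x1 x2 = x2 ^ d * poly (cp p) (x1 / x2)"
proof -
  have "x2 ^ d * poly (cp p) (x1 / x2) = (\<Sum>i\<le>d. x2 ^ d * (complex_of_real (coeff p i) * (x1/x2) ^ i))"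
    by (simp add: eval_sum[OF assms(2)] sum_distrib_left)
  also have "\<dots> = (\<Sum>i\<le>d. complex_of_real (coeff p i) * x1 ^ i * x2 ^ (d - i))"
  proof (rule sum.cong)
    fix i assume "i \<in> {..d}"
    then have "x2 ^ d = x2 ^ i * x2 ^ (d - i)" by (simp add: power_add[symmetric])
    then show "x2 ^ d * (complex_of_real (coeff p i) * (x1/x2) ^ i) = complex_of_real (coeff p i) * x1 ^ i * x2 ^ (d - i)"
      using assms(1) by (simp add: power_divide field_simps)
  qed simp
  finally show ?thesis by (simp add: bf_eval_def)
qed

lemma bf_eval_0: "bf_eval d p x1 0 = complex_of_real (coeff p d) * x1 ^ d"
proof -
  have "bf_eval d p x1 0 = (\<Sum>i\<le>d. if i = d then complex_of_real (coeff p d) * x1 ^ d else 0)"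
    unfolding bf_eval_def by (rule sum.cong) (auto simp: power_0_left)
  then show ?thesis by simp
qed

lemma coeff_sq:
  fixes p :: "real poly"
  assumes "degree p \<le> n"
  shows "coeff (p ^ 2) (2 * n) = (coeff p n) ^ 2"
proof (cases "degree p = n")
  case True
  then show ?thesis using coeff_mult_degree_sum[of p p] by (simp add: power2_eq_square mult_2)
next
  case False
  have "degree (p^2) \<le> 2 * degree p" by (metis degree_power_le mult.commute)
  moreover have "degree p < n" using False assms by simp
  ultimately have "degree (p^2) < 2 * n" by linarith
  then show ?thesis using False assms by (simp add: coeff_eq_0)
qed

lemma dvd_bound:
  assumes "bf_dvd e q d p" "p \<noteq> 0"
  shows "q \<noteq> 0 \<and> q dvd p \<and> degree p + e \<le> d + degree q"
proof -
  obtain w where w: "e \<le> d" "degree w \<le> d - e" "p = w * q"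
    using assms(1) unfolding bf_dvd_def is_bform_def by blast
  then have "w \<noteq> 0" "q \<noteq> 0" using assms(2) by auto
  then have "degree p = degree w + degree q" using w(3) by (simp add: degree_mult_eq)
  then show ?thesis using w \<open>q \<noteq> 0\<close> by auto
qed

lemma dvd_intro:
  assumes "q dvd p" "q \<noteq> 0" "e \<le> d" "p \<noteq> 0 \<Longrightarrow> degree p + e \<le> d + degree q"
  shows "bf_dvd e q d p"
proof (cases "p = 0")
  case True
  then show ?thesis using assms(3) unfolding bf_dvd_def is_bform_def by (intro conjI exI[of _ 0]) auto
next
  case False
  obtain w where w: "p = q * w" using assms(1) by blast
  then have "w \<noteq> 0" using False by auto
  then have "degree p = degree w + degree q" using w assms(2) by (simp add: degree_mult_eq)
  then have "degree w \<le> d - e" using assms(4)[OF False] by linarith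
  then show ?thesis using assms(3) w unfolding bf_dvd_def is_bform_def by (intro conjI exI[of _ w]) (auto simp: mult.commute)
qed

lemma gcd_upper:
  fixes u1 u2 :: "real poly"
  assumes "degree u1 \<le> d" "degree u2 \<le> d" "u1 \<noteq> 0 \<or> u2 \<noteq> 0"
    and "bf_dvd e q d u1" "bf_dvd e q d u2"
  shows "q \<noteq> 0 \<and> q dvd gcd u1 u2 \<and> e + max (degree u1) (degree u2) \<le> d + degree q"
proof -
  have q: "q \<noteq> 0" using assms dvd_bound by blast
  have d1: "q dvd u1" using assms(4) dvd_bound[OF assms(4)] by (cases "u1 = 0") auto
  have d2: "q dvd u2" using assms(5) dvd_bound[OF assms(5)] by (cases "u2 = 0") auto
  have "e + max (degree u1) (degree u2) \<le> d + degree q"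
  proof (cases "u1 \<noteq> 0 \<and> degree u2 \<le> degree u1")
    case True
    then show ?thesis using dvd_bound[OF assms(4)] by auto
  next
    case False
    then have "u2 \<noteq> 0 \<and> degree u1 \<le> degree u2" using assms(3) by auto
    then show ?thesis using dvd_bound[OF assms(5)] by auto
  qed
  then show ?thesis using q d1 d2 by auto
qed

lemma gcd_canon:
  fixes u1 u2 :: "real poly"
  assumes "degree u1 \<le> d" "degree u2 \<le> d" "u1 \<noteq> 0 \<or> u2 \<noteq> 0"
  shows "bf_is_gcd d u1 d u2 (degree (gcd u1 u2) + (d - max (degree u1) (degree u2))) (gcd u1 u2)"
proof -
  let ?G = "gcd u1 u2" and ?D = "max (degree u1) (degree u2)"
  have G0: "?G \<noteq> 0" using assms(3) by auto
  have "degree ?G \<le> ?D"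
  proof (cases "u1 = 0")
    case True
    then show ?thesis using assms(3) by (simp add: dvd_imp_degree_le)
  next
    case False
    then show ?thesis using dvd_imp_degree_le[of ?G u1] by auto
  qed
  moreover have "?D \<le> d" using assms by auto
  ultimately have le: "degree ?G + (d - ?D) \<le> d" by linarith
  have dv1: "bf_dvd (degree ?G + (d - ?D)) ?G d u1"
    by (rule dvd_intro) (use G0 le assms in auto)
  have dv2: "bf_dvd (degree ?G + (d - ?D)) ?G d u2"
    by (rule dvd_intro) (use G0 le assms in auto)
  have mx: "e' \<le> degree ?G + (d - ?D)" if "bf_dvd e' q' d u1" "bf_dvd e' q' d u2" for e' q'
  proof -
    have "q' \<noteq> 0 \<and> q' dvd ?G \<and> e' + ?D \<le> d + degree q'"
      using gcd_upper[OF assms that] .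
    moreover then have "degree q' \<le> degree ?G" using G0 dvd_imp_degree_le by blast
    ultimately show ?thesis using \<open>?D \<le> d\<close> by linarith
  qed
  show ?thesis unfolding bf_is_gcd_def is_bform_def using dv1 dv2 mx by auto
qed

lemma gcd_char:
  fixes u1 u2 :: "real poly"
  assumes "degree u1 \<le> d" "degree u2 \<le> d" "u1 \<noteq> 0 \<or> u2 \<noteq> 0"
    and "bf_is_gcd d u1 d u2 E Q"
  shows "E = degree (gcd u1 u2) + (d - max (degree u1) (degree u2)) \<and> Q \<noteq> 0 \<and> Q dvd gcd u1 u2
     \<and> degree Q = degree (gcd u1 u2)"
proof -
  let ?G = "gcd u1 u2" and ?D = "max (degree u1) (degree u2)"
  have G0: "?G \<noteq> 0" using assms(3) by auto
  have c: "bf_is_gcd d u1 d u2 (degree ?G + (d - ?D)) ?G" using gcd_canon[OF assms(1-3)] .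
  have "bf_dvd E Q d u1" "bf_dvd E Q d u2" using assms(4) unfolding bf_is_gcd_def by auto
  then have u: "Q \<noteq> 0 \<and> Q dvd ?G \<and> E + ?D \<le> d + degree Q"
    using gcd_upper[OF assms(1-3)] by blast
  then have dq: "degree Q \<le> degree ?G" using G0 dvd_imp_degree_le by blast
  have "degree ?G + (d - ?D) \<le> E" using c assms(4) unfolding bf_is_gcd_def by blast
  moreover have "?D \<le> d" using assms by auto
  ultimately show ?thesis using u dq by auto
qed

lemma dvd_same_degree:
  fixes p q :: "'a::field poly"
  assumes "p dvd q" "q \<noteq> 0" "degree p = degree q"
  shows "\<exists>c. c \<noteq> 0 \<and> q = smult c p"
proof -
  obtain w where w: "q = p * w" using assms(1) by blast
  then have "w \<noteq> 0" "p \<noteq> 0" using assms(2) by auto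
  then have "degree w = 0" using w assms(3) by (simp add: degree_mult_eq)
  then obtain c where "w = [:c:]" by (meson degree_eq_zeroE)
  then show ?thesis using w \<open>w \<noteq> 0\<close> by (intro exI[of _ c]) auto
qed

lemma cp_add: "cp (p + q) = cp p + cp q"
  by (simp add: poly_eq_iff coeff_map_poly)

lemma split_poly:
  fixes Q S :: "real poly"
  assumes "Q \<noteq> 0"
  shows "\<exists>g h N. Q = g * h \<and> coprime g S \<and> h dvd S ^ N"
  using assms
proof (induction "degree Q" arbitrary: Q rule: less_induct)
  case less
  show ?case
  proof (cases "coprime Q S")
    case True
    then show ?thesis by (intro exI[of _ Q] exI[of _ 1] exI[of _ 0]) auto
  next
    case False
    define r where "r = gcd Q S"
    have r0: "r \<noteq> 0" using less.prems r_def by auto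
    have "\<not> is_unit r" using False r_def by (simp add: coprime_iff_gcd_eq_1)
    then have dr: "degree r > 0" using is_unit_iff_degree[OF r0] by auto
    obtain Q' where Q': "Q = r * Q'" using r_def by (meson dvd_def gcd_dvd1)
    then have Q'0: "Q' \<noteq> 0" using less.prems by auto
    have "degree Q = degree r + degree Q'" using Q' r0 Q'0 by (simp add: degree_mult_eq)
    then have "degree Q' < degree Q" using dr by linarith
    then obtain g h N where ih: "Q' = g * h" "coprime g S" "h dvd S ^ N"
      using less.hyps Q'0 by blast
    have "r * h dvd S * S ^ N" using ih(3) r_def by (simp add: mult_dvd_mono)
    then have "r * h dvd S ^ Suc N" by simp
    moreover have "Q = g * (r * h)" using Q' ih(1) by (simp add: ac_simps)
    ultimately show ?thesis using ih(2) by blast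
  qed
qed

lemma coprime_no_common_root:
  fixes g S :: "real poly"
  assumes "coprime g S" "poly (cp g) z = 0"
  shows "poly (cp S) z \<noteq> 0"
proof
  assume a: "poly (cp S) z = 0"
  define a1 where "a1 = fst (bezout_coefficients g S)"
  define b1 where "b1 = snd (bezout_coefficients g S)"
  have "a1 * g + b1 * S = 1" using bezout_coefficients_fst_snd[of g S] assms(1) a1_def b1_def by simp
  then have "cp (a1 * g + b1 * S) = cp 1" by simp
  then have "cp a1 * cp g + cp b1 * cp S = 1" by (simp add: cp_add cp_mult)
  then have "poly (cp a1 * cp g + cp b1 * cp S) z = 1" by simp
  then show False using a assms(2) by simp
qed

lemma form_coprime_imp:
  fixes p1 p2 :: "real poly"
  assumes "bf_coprime n1 p1 n2 p2" "p1 \<noteq> 0" "p2 \<noteq> 0" "degree p1 \<le> n1" "degree p2 \<le> n2"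
  shows "coprime p1 p2"
proof -
  define r where "r = gcd p1 p2"
  have r0: "r \<noteq> 0" using assms(2) r_def by auto
  have "degree r \<le> degree p1" using r0 assms(2) r_def dvd_imp_degree_le by auto
  have "degree r \<le> degree p2" using r0 assms(3) r_def dvd_imp_degree_le by auto
  have "bf_dvd (degree r) r n1 p1"
    by (rule dvd_intro) (use r_def r0 assms \<open>degree r \<le> degree p1\<close> in auto)
  moreover have "bf_dvd (degree r) r n2 p2"
    by (rule dvd_intro) (use r_def r0 assms \<open>degree r \<le> degree p2\<close> in auto)
  ultimately have "degree r \<le> 0" using assms(1) unfolding bf_coprime_def bf_is_gcd_def is_bform_def by blast
  then have "is_unit r" using is_unit_iff_degree[OF r0] by simp
  then show ?thesis using r_def by (simp add: coprime_iff_gcd_eq_1)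
qed

lemma coprime_imp_form:
  fixes p1 p2 :: "real poly"
  assumes "coprime p1 p2" "p1 \<noteq> 0" "p2 \<noteq> 0" "degree p1 = n1" "degree p2 \<le> n2"
  shows "bf_coprime n1 p1 n2 p2"
proof -
  have a: "bf_dvd 0 1 n1 p1" by (rule dvd_intro) (use assms in auto)
  have b: "bf_dvd 0 1 n2 p2" by (rule dvd_intro) (use assms in auto)
  have c: "e' \<le> 0" if "bf_dvd e' q' n1 p1" "bf_dvd e' q' n2 p2" for e' q'
  proof -
    have x: "q' \<noteq> 0 \<and> q' dvd p1 \<and> degree p1 + e' \<le> n1 + degree q'" using dvd_bound[OF that(1) assms(2)] .
    have "q' dvd p2" using dvd_bound[OF that(2) assms(3)] by blast
    then have "is_unit q'" using x assms(1) coprime_common_divisor by blast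
    then have "degree q' = 0" using x is_unit_iff_degree by blast
    then show ?thesis using x assms(4) by simp
  qed
  show ?thesis unfolding bf_coprime_def bf_is_gcd_def is_bform_def using a b c by auto
qed

lemma gcd_quot_coprime:
  assumes "bf_is_gcd d u1 d u2 E Q" "u1 = v1 * Q" "u2 = v2 * Q"
    "is_bform (d - E) v1" "is_bform (d - E) v2"
  shows "bf_coprime (d - E) v1 (d - E) v2"
proof -
  have EQ: "E \<le> d" "degree Q \<le> E" using assms(1) unfolding bf_is_gcd_def bf_dvd_def is_bform_def by auto
  have a: "bf_dvd 0 1 (d - E) v1" "bf_dvd 0 1 (d - E) v2"
    using assms(4,5) unfolding bf_dvd_def by auto
  have c: "e' \<le> 0" if pr: "is_bform e' q'" "bf_dvd e' q' (d - E) v1" "bf_dvd e' q' (d - E) v2" for e' q'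
  proof -
    obtain w1 where w1: "e' \<le> d - E" "degree w1 \<le> d - E - e'" "v1 = w1 * q'"
      using pr(2) unfolding bf_dvd_def is_bform_def by blast
    obtain w2 where w2: "degree w2 \<le> d - E - e'" "v2 = w2 * q'"
      using pr(3) unfolding bf_dvd_def is_bform_def by blast
    have "degree (q' * Q) \<le> e' + E"
      using degree_mult_le[of q' Q] pr(1) EQ unfolding is_bform_def by linarith
    then have f: "is_bform (e' + E) (q' * Q)" unfolding is_bform_def .
    have "d - (e' + E) = d - E - e'" by simp
    then have "bf_dvd (e' + E) (q' * Q) d u1"
      unfolding bf_dvd_def is_bform_def using w1 w2 assms(2,3) EQ
      by (auto intro!: exI[of _ w1] simp: ac_simps)
    moreover have "bf_dvd (e' + E) (q' * Q) d u2"
      unfolding bf_dvd_def is_bform_def using w1 w2 assms(2,3) EQ \<open>d - (e' + E) = d - E - e'\<close>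
      by (auto intro!: exI[of _ w2] simp: ac_simps)
    ultimately have "e' + E \<le> E" using assms(1) f unfolding bf_is_gcd_def by blast
    then show ?thesis by simp
  qed
  show ?thesis unfolding bf_coprime_def bf_is_gcd_def using a c by (auto simp: is_bform_def)
qed

lemma S_coeff:
  fixes v1 v2 :: "real poly"
  assumes "bf_coprime n v1 n v2" "degree v1 \<le> n" "degree v2 \<le> n" "v1 \<noteq> 0 \<or> v2 \<noteq> 0"
  shows "coeff (v1^2 + v2^2) (2 * n) \<noteq> 0"
proof
  assume "coeff (v1^2 + v2^2) (2 * n) = 0"
  then have "(coeff v1 n)^2 + (coeff v2 n)^2 = 0" using coeff_sq assms(2,3) by simp
  then have z: "coeff v1 n = 0" "coeff v2 n = 0" by (simp_all add: sum_power2_eq_zero_iff)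
  have lt: "degree v < n \<or> v = 0" if "degree v \<le> n" "coeff v n = 0" for v :: "real poly"
    using that by (metis le_neq_implies_less leading_coeff_0_iff)
  show False
  proof (cases "n = 0")
    case True
    then show ?thesis using lt[OF assms(2) z(1)] lt[OF assms(3) z(2)] assms(4) by auto
  next
    case False
    have "degree v1 \<le> n - 1" "degree v2 \<le> n - 1"
      using lt[OF assms(2) z(1)] lt[OF assms(3) z(2)] by auto
    then have "bf_dvd 1 1 n v1" "bf_dvd 1 1 n v2" using False unfolding bf_dvd_def is_bform_def by auto
    then show False using assms(1) unfolding bf_coprime_def bf_is_gcd_def is_bform_def by fastforce
  qed
qed

lemma cp_power: "cp (p ^ N) = cp p ^ N"
  by (induction N) (simp_all add: cp_mult)

lemma cp_smult: "cp (smult a p) = smult (complex_of_real a) (cp p)"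
  by (simp add: poly_eq_iff coeff_map_poly)

lemma deg_S:
  fixes v1 v2 :: "real poly"
  assumes "degree v1 \<le> n" "degree v2 \<le> n"
  shows "degree (v1^2 + v2^2) \<le> 2 * n"
proof -
  have "degree (v1^2) \<le> 2 * n" using degree_power_le[of v1 2] assms(1) by linarith
  moreover have "degree (v2^2) \<le> 2 * n" using degree_power_le[of v2 2] assms(2) by linarith
  ultimately show ?thesis using degree_add_le by blast
qed

lemma existence:
  fixes u1 u2 :: "real poly"
  assumes "is_bform d u1" "is_bform d u2" "u1 \<noteq> 0 \<or> u2 \<noteq> 0"
  shows "\<exists>m k g h v1 v2. bf_decomp d u1 u2 m k g h v1 v2"
proof -
  have A: "degree u1 \<le> d" "degree u2 \<le> d" using assms(1,2) unfolding is_bform_def by auto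
  define G where "G = gcd u1 u2"
  define t where "t = d - max (degree u1) (degree u2)"
  define E where "E = degree G + t"
  have gc: "bf_is_gcd d u1 d u2 E G" using gcd_canon[OF A assms(3)] unfolding G_def E_def t_def .
  have G0: "G \<noteq> 0" using assms(3) G_def by auto
  obtain v1 where v1: "E \<le> d" "is_bform (d - E) v1" "u1 = v1 * G"
    using gc unfolding bf_is_gcd_def bf_dvd_def by blast
  obtain v2 where v2: "is_bform (d - E) v2" "u2 = v2 * G"
    using gc unfolding bf_is_gcd_def bf_dvd_def by blast
  define n where "n = d - E"
  have cop: "bf_coprime n v1 n v2" using gcd_quot_coprime[OF gc v1(3) v2(2) v1(2) v2(1)] n_def by simp
  define S where "S = v1^2 + v2^2"
  have dv: "degree v1 \<le> n" "degree v2 \<le> n" using v1 v2 n_def unfolding is_bform_def by auto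
  have vnz: "v1 \<noteq> 0 \<or> v2 \<noteq> 0" using assms(3) v1(3) v2(2) by auto
  have cS: "coeff S (2 * n) \<noteq> 0" using S_coeff[OF cop dv vnz] S_def by simp
  have dS1: "degree S \<le> 2 * n" using deg_S[OF dv] S_def by simp
  have dS: "degree S = 2 * n" using le_degree[OF cS] dS1 by linarith
  have S0: "S \<noteq> 0" using cS by auto
  obtain g h N where gh: "G = g * h" "coprime g S" "h dvd S ^ N" using split_poly[OF G0] by blast
  have g0: "g \<noteq> 0" and h0: "h \<noteq> 0" using gh(1) G0 by auto
  define m where "m = degree g + t"
  define k where "k = degree h"
  have mk: "m + k = E" using gh(1) g0 h0 unfolding m_def k_def E_def by (simp add: degree_mult_eq)
  have nn: "d - m - k = n" using mk n_def by simp
  have cgS: "bf_coprime (2 * n) S m g"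
    by (rule coprime_imp_form) (use gh(2) S0 g0 dS m_def in \<open>auto simp: coprime_commute\<close>)
  have roots: "bf_eval (2 * n) S x1 x2 = 0" if "(x1, x2) \<noteq> (0, 0)" "bf_eval k h x1 x2 = 0" for x1 x2
  proof (cases "x2 = 0")
    case True
    then have "x1 \<noteq> 0" using that(1) by auto
    moreover have "coeff h k \<noteq> 0" using h0 k_def by simp
    ultimately have "bf_eval k h x1 x2 \<noteq> 0" using True by (simp add: bf_eval_0)
    then show ?thesis using that(2) by simp
  next
    case False
    have "poly (cp h) (x1 / x2) = 0" using that(2) bf_eval_x2[OF False, of h k] False k_def by simp
    moreover obtain w where "S ^ N = h * w" using gh(3) by blast
    then have "cp S ^ N = cp h * cp w" by (metis cp_mult cp_power)
    then have "poly (cp S) (x1 / x2) ^ N = poly (cp h) (x1 / x2) * poly (cp w) (x1 / x2)"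
      by (metis poly_mult poly_power)
    ultimately have "poly (cp S) (x1 / x2) = 0" by simp
    then show ?thesis using bf_eval_x2[OF False dS1] by simp
  qed
  have "bf_decomp d u1 u2 m k g h v1 v2"
    unfolding bf_decomp_def nn
    using mk v1 v2 gc gh(1) cop cgS roots
    by (auto simp: is_bform_def m_def k_def S_def n_def ac_simps)
  then show ?thesis by blast
qed

lemma decomp_facts:
  fixes u1 u2 :: "real poly"
  assumes "is_bform d u1" "is_bform d u2" "u1 \<noteq> 0 \<or> u2 \<noteq> 0"
    and D: "bf_decomp d u1 u2 m k g h v1 v2"
  shows "m + k = degree (gcd u1 u2) + (d - max (degree u1) (degree u2))"
    "g * h \<noteq> 0" "g * h dvd gcd u1 u2" "degree (g * h) = degree (gcd u1 u2)"
    "k = degree h"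
    "\<And>z. poly (cp g) z = 0 \<Longrightarrow> poly (cp (v1^2 + v2^2)) z \<noteq> 0"
    "\<And>z. poly (cp h) z = 0 \<Longrightarrow> poly (cp (v1^2 + v2^2)) z = 0"
proof -
  have A: "degree u1 \<le> d" "degree u2 \<le> d" using assms(1,2) unfolding is_bform_def by auto
  define n where "n = d - m - k"
  define S where "S = v1^2 + v2^2"
  have gc: "bf_is_gcd d u1 d u2 (m + k) (g * h)" using D unfolding bf_decomp_def by blast
  note gch = gcd_char[OF A assms(3) gc]
  show "m + k = degree (gcd u1 u2) + (d - max (degree u1) (degree u2))"
    "g * h \<noteq> 0" "g * h dvd gcd u1 u2" "degree (g * h) = degree (gcd u1 u2)" using gch by auto
  have g0: "g \<noteq> 0" "h \<noteq> 0" using gch by auto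
  have cop: "bf_coprime n v1 n v2" and dv: "degree v1 \<le> n" "degree v2 \<le> n"
    and cgS: "bf_coprime (2 * n) S m g" and dg: "degree g \<le> m" and dh: "degree h \<le> k"
    and rt: "\<And>x1 x2. (x1, x2) \<noteq> (0, 0) \<Longrightarrow> bf_eval k h x1 x2 = 0 \<Longrightarrow> bf_eval (2 * n) S x1 x2 = 0"
    and us: "u1 = v1 * g * h" "u2 = v2 * g * h"
    using D unfolding bf_decomp_def n_def S_def is_bform_def by auto
  have vnz: "v1 \<noteq> 0 \<or> v2 \<noteq> 0" using assms(3) us by auto
  have cS: "coeff S (2 * n) \<noteq> 0" using S_coeff[OF cop dv vnz] S_def by simp
  have dS1: "degree S \<le> 2 * n" using deg_S[OF dv] S_def by simp
  have S0: "S \<noteq> 0" using cS by auto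
  show "k = degree h"
  proof (rule ccontr)
    assume "k \<noteq> degree h"
    then have "coeff h k = 0" using dh by (simp add: coeff_eq_0)
    then have "bf_eval k h 1 0 = 0" by (simp add: bf_eval_0)
    then have "bf_eval (2 * n) S 1 0 = 0" using rt by auto
    then show False using cS by (simp add: bf_eval_0)
  qed
  have "coprime S g" by (rule form_coprime_imp[OF cgS S0 g0(1) dS1 dg])
  then show "\<And>z. poly (cp g) z = 0 \<Longrightarrow> poly (cp (v1^2 + v2^2)) z \<noteq> 0"
    using coprime_no_common_root S_def by (metis coprime_commute)
  show "\<And>z. poly (cp h) z = 0 \<Longrightarrow> poly (cp (v1^2 + v2^2)) z = 0"
  proof -
    fix z assume "poly (cp h) z = 0"
    then have "bf_eval k h z 1 = 0" using bf_eval_x2[of 1 h k z] dh by simp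
    then have "bf_eval (2 * n) S z 1 = 0" using rt by auto
    then show "poly (cp (v1^2 + v2^2)) z = 0" using bf_eval_x2[of 1 S "2 * n" z] dS1 S_def by simp
  qed
qed

lemma root_dvd:
  assumes "p dvd q" "poly (cp p) z = 0"
  shows "poly (cp q) z = 0"
proof -
  obtain w where "q = p * w" using assms(1) by blast
  then show ?thesis using assms(2) by (simp add: cp_mult)
qed

lemma h_dvd:
  fixes g h g' h' S :: "real poly"
  assumes "g * h = smult a (g' * h')" "a \<noteq> 0" "h \<noteq> 0"
    "\<And>z. poly (cp h) z = 0 \<Longrightarrow> poly (cp S) z = 0"
    "\<And>z. poly (cp g') z = 0 \<Longrightarrow> poly (cp S) z \<noteq> 0"
  shows "h dvd h'"
proof -
  define r where "r = gcd h g'"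
  have r0: "r \<noteq> 0" using assms(3) r_def by auto
  have "degree r = 0"
  proof (rule ccontr)
    assume "degree r \<noteq> 0"
    then have "\<not> constant (poly (cp r))" using constant_degree[of "cp r"] by simp
    then obtain z where z: "poly (cp r) z = 0" using fundamental_theorem_of_algebra by blast
    have "poly (cp h) z = 0" using root_dvd[OF _ z] r_def by simp
    moreover have "poly (cp g') z = 0" using root_dvd[OF _ z] r_def by simp
    ultimately show False using assms(4,5) by blast
  qed
  then have "coprime h g'" using is_unit_iff_degree[OF r0] r_def by (simp add: coprime_iff_gcd_eq_1)
  moreover have "h dvd g' * h'"
    using assms(1,2) by (metis dvd_smult_iff dvd_triv_right)
  ultimately show ?thesis using coprime_dvd_mult_right_iff by blast
qed

lemma uniqueness:
  fixes u1 u2 :: "real poly"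
  assumes "is_bform d u1" "is_bform d u2" "u1 \<noteq> 0 \<or> u2 \<noteq> 0"
    and D1: "bf_decomp d u1 u2 m k g h v1 v2" and D2: "bf_decomp d u1 u2 m' k' g' h' v1' v2'"
  shows "m' = m \<and> k' = k \<and>
            (\<exists>a b c. a \<noteq> 0 \<and> b \<noteq> 0 \<and> c \<noteq> 0 \<and>
               g' = smult a g \<and> h' = smult b h \<and> v1' = smult c v1 \<and> v2' = smult c v2)"
proof -
  note F1 = decomp_facts[OF assms(1-3) D1]
  note F2 = decomp_facts[OF assms(1-3) D2]
  have G0: "gcd u1 u2 \<noteq> 0" using assms(3) by auto
  obtain c1 where c1: "c1 \<noteq> 0" "gcd u1 u2 = smult c1 (g * h)"
    using dvd_same_degree[OF F1(3) G0 F1(4)] by blast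
  obtain c2 where c2: "c2 \<noteq> 0" "gcd u1 u2 = smult c2 (g' * h')"
    using dvd_same_degree[OF F2(3) G0 F2(4)] by blast
  define l where "l = c1 / c2"
  have l0: "l \<noteq> 0" using c1 c2 l_def by simp
  have Q: "g' * h' = smult l (g * h)"
  proof -
    have "smult c2 (g' * h') = smult c1 (g * h)" using c1 c2 by simp
    then have "smult (1/c2) (smult c2 (g' * h')) = smult (1/c2) (smult c1 (g * h))" by simp
    then show ?thesis using c2(1) l_def by simp
  qed
  have Q': "g * h = smult (1/l) (g' * h')" using Q l0 by simp
  have us1: "u1 = v1 * (g * h)" "u2 = v2 * (g * h)" "u1 = v1' * (g' * h')" "u2 = v2' * (g' * h')"
    using D1 D2 unfolding bf_decomp_def by (auto simp: ac_simps)
  have v1: "v1 = smult l v1'"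
  proof -
    have "v1 * (g * h) = smult l v1' * (g * h)" using us1 Q by simp
    then show ?thesis using F1(2) mult_right_cancel by blast
  qed
  have v2: "v2 = smult l v2'"
  proof -
    have "v2 * (g * h) = smult l v2' * (g * h)" using us1 Q by simp
    then show ?thesis using F1(2) mult_right_cancel by blast
  qed
  have SS: "v1^2 + v2^2 = smult (l^2) (v1'^2 + v2'^2)"
    using v1 v2 by (simp add: power2_eq_square algebra_simps smult_add_right)
  have Sr: "poly (cp (v1^2 + v2^2)) z = 0 \<longleftrightarrow> poly (cp (v1'^2 + v2'^2)) z = 0" for z
    using SS l0 by (simp add: cp_smult)
  have h0: "h \<noteq> 0" "h' \<noteq> 0" "g \<noteq> 0" "g' \<noteq> 0" using F1(2) F2(2) by auto
  have d1: "h dvd h'"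
    by (rule h_dvd[OF Q' _ h0(1), of "v1^2 + v2^2"]) (use l0 F1(7) F2(6) Sr in auto)
  have d2: "h' dvd h"
    by (rule h_dvd[OF Q l0 h0(2), of "v1^2 + v2^2"]) (use F2(7) F1(6) Sr in auto)
  have "degree h = degree h'" using d1 d2 h0 dvd_imp_degree_le by (meson antisym)
  then obtain b where b: "b \<noteq> 0" "h' = smult b h" using dvd_same_degree[OF d1 h0(2)] by blast
  have kk: "k' = k" using F1(5) F2(5) \<open>degree h = degree h'\<close> by simp
  have mm: "m' = m" using F1(1) F2(1) kk by simp
  have "smult b g' * h = smult l g * h" using Q b by (simp add: ac_simps)
  then have "smult b g' = smult l g" using h0(1) mult_right_cancel by blast
  then have "g' = smult (l / b) g" using b(1)
    by (metis divide_inverse mult.commute nonzero_divide_eq_eq smult_smult smult_eq_iff)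
  then show ?thesis using kk mm b v1 v2 l0
    by (intro conjI exI[of _ "l / b"] exI[of _ b] exI[of _ "1 / l"]) auto
qed

theorem proposition3p4:
  fixes d :: nat and u1 u2 :: "real poly"
  assumes "is_bform d u1" and "is_bform d u2" and "u1 \<noteq> 0 \<or> u2 \<noteq> 0"
  shows "(\<exists>m k g h v1 v2. bf_decomp d u1 u2 m k g h v1 v2) \<and>
         (\<forall>m k g h v1 v2 m' k' g' h' v1' v2'.
            bf_decomp d u1 u2 m k g h v1 v2 \<and> bf_decomp d u1 u2 m' k' g' h' v1' v2' \<longrightarrow>
            m' = m \<and> k' = k \<and>
            (\<exists>a b c. a \<noteq> 0 \<and> b \<noteq> 0 \<and> c \<noteq> 0 \<and>
               g' = smult a g \<and> h' = smult b h \<and> v1' = smult c v1 \<and> v2' = smult c v2))"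
  using existence[OF assms] uniqueness[OF assms] by blast

end
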